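(* Let $\gamma_1,\gamma_2>0$ and let $q\mapsto A_q$ be the weak attractor of the birth-death chain RDS $(\theta,\varphi)$ described in the context. Then $\mathbb{P}(\#A_q=2)=1$, and $A_q\cap W_i\neq\emptyset$ for $i=0,1$, $\mathbb{P}$-a.s., where $W_0=\{0,2,4,\dots\}$ and $W_1=\{1,3,5,\dots\}$.
   Context: Noise space $\mathcal{Q}=\{q=(q_n)_{n\in\mathbb{Z}}: q_n\in[0,1]\}$ with product Borel $\sigma$-algebra and $\mathbb{P}=\lambda^{\mathbb{Z}}$ ($\lambda$ Lebesgue on $[0,1]$), invertible shift $(\theta q)_n=q_{n+1}$. For $q\in\mathcal{Q}$, $f_q(x)=x+1$ if $q_0<\frac{\gamma_1}{\gamma_1+\gamma_2x}$ and $f_q(x)=x-1$ otherwise; $\varphi^0_q=\mathrm{id}$, $\varphi^n_q=f_{\theta^{n-1}q}\circ\cdots\circ f_q$. With $d(x,B)=\inf_{y\in B}|x-y|$ and $\mathrm{dist}(A,B)=\sup_{x\in A}d(x,B)$, a weak attractor is a map $A:\mathcal{Q}\to\mathcal{P}(\mathbb{N}_0)$ with $q\mapsto d(x,A_q)$ measurable for each $x$, $A_q$ nonempty and finite for all $q$, $\varphi^n_q(A_q)=A_{\theta^nq}$ for all $n\in\mathbb{N}$ $\mathbb{P}$-a.s., and $\mathrm{dist}(\varphi^n_q(B),A_{\theta^nq})\to0$ in probability for every finite $B\subset\mathbb{N}_0$. This RDS has a weak attractor, unique up to $\mathbb{P}$-a.s. equality. *)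

theory Defs
  imports "HOL-Probability.Probability"
begin

type_synonym noise = "int \<Rightarrow> real"

definition noiseP :: "noise measure" where
  "noiseP = PiM UNIV (\<lambda>_::int. restrict_space lborel {0..1::real})"

definition shift :: "noise \<Rightarrow> noise" where
  "shift q = (\<lambda>n. q (n + 1))"

text \<open>One step of the birth-death chain (state space N0; natural-number
  subtraction, the case x = 0, q_0 >= 1 being a null event).\<close>
definition bd_step :: "real \<Rightarrow> real \<Rightarrow> noise \<Rightarrow> nat \<Rightarrow> nat" where
  "bd_step g1 g2 q x = (if q 0 < g1 / (g1 + g2 * real x) then x + 1 else x - 1)"

primrec bd_cocycle :: "real \<Rightarrow> real \<Rightarrow> nat \<Rightarrow> noise \<Rightarrow> nat \<Rightarrow> nat" where
  "bd_cocycle g1 g2 0 q x = x"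
| "bd_cocycle g1 g2 (Suc n) q x = bd_step g1 g2 ((shift ^^ n) q) (bd_cocycle g1 g2 n q x)"

definition pdist :: "nat \<Rightarrow> nat set \<Rightarrow> real" where
  "pdist x B = infdist (real x) (real ` B)"

definition hdist :: "nat set \<Rightarrow> nat set \<Rightarrow> real" where
  "hdist A B = (if A = {} then 0 else Sup ((\<lambda>x. pdist x B) ` A))"

definition weak_attractor :: "real \<Rightarrow> real \<Rightarrow> (noise \<Rightarrow> nat set) \<Rightarrow> bool" where
  "weak_attractor g1 g2 A \<longleftrightarrow>
     (\<forall>x. (\<lambda>q. pdist x (A q)) \<in> borel_measurable noiseP)
   \<and> (\<forall>q\<in>space noiseP. A q \<noteq> {} \<and> finite (A q))
   \<and> (AE q in noiseP. \<forall>n. bd_cocycle g1 g2 n q ` A q = A ((shift ^^ n) q))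
   \<and> (\<forall>B. finite B \<longrightarrow> (\<forall>e>0.
        (\<lambda>n. emeasure noiseP {q \<in> space noiseP.
              hdist (bd_cocycle g1 g2 n q ` B) (A ((shift ^^ n) q)) > e})
        \<longlonglongrightarrow> 0))"

end

theory Submission
  imports Defs
begin

abbreviation Mu :: "int \<Rightarrow> real measure" where "Mu \<equiv> (\<lambda>_. restrict_space lborel {0..1::real})"

lemma prob_space_Mu: "prob_space (restrict_space lborel {0..1::real})"
  by (rule prob_space_restrict_space) auto

lemma noiseP_prob: "prob_space noiseP"
  unfolding noiseP_def by (rule prob_space_PiM) (simp add: prob_space_Mu)

interpretation NP: prob_space noiseP by (rule noiseP_prob)

lemma space_noiseP: "space noiseP = {q. \<forall>k. q k \<in> {0..1}}"
  by (auto simp add: noiseP_def space_PiM PiE_def Pi_def space_restrict_space)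

lemma shift_pow: "(shift ^^ j) q k = q (k + int j)"
  by (induction j arbitrary: k) (auto simp: shift_def algebra_simps)

lemma coc_Suc: "bd_cocycle g1 g2 (Suc n) q x =
   (let v = bd_cocycle g1 g2 n q x in if q (int n) < g1 / (g1 + g2 * real v) then v + 1 else v - 1)"
  by (simp add: bd_step_def shift_pow Let_def)

lemma coord_meas: "i \<in> I \<Longrightarrow> (\<lambda>q. q i) \<in> borel_measurable (PiM I Mu)"
  apply (rule measurable_compose[OF measurable_component_singleton])
  apply assumption
  apply (rule measurable_restrict_space1) by simp

lemma coc_meas: "(\<forall>k<n. int k \<in> I) \<Longrightarrow> (\<lambda>q. bd_cocycle g1 g2 n q x) \<in> measurable (PiM I Mu) (count_space UNIV)"
proof (induction n)
  case 0 then show ?case by simp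
next
  case (Suc n)
  then have IH: "(\<lambda>q. bd_cocycle g1 g2 n q x) \<in> measurable (PiM I Mu) (count_space UNIV)" by auto
  have r: "(\<lambda>q. real (bd_cocycle g1 g2 n q x)) \<in> borel_measurable (PiM I Mu)"
    using IH by (rule measurable_compose) simp
  have c: "(\<lambda>q. q (int n)) \<in> borel_measurable (PiM I Mu)" using Suc.prems by (intro coord_meas) auto
  show ?case unfolding coc_Suc Let_def
    apply (rule measurable_If)
    apply (rule measurable_compose[OF IH]) apply simp
    apply (rule measurable_compose[OF IH]) apply simp
    using r c by measurable
qed

lemma noiseP_eq: "noiseP = PiM UNIV Mu" by (simp add: noiseP_def)

lemma shift_eq: "shift = (\<lambda>\<omega>. \<lambda>n\<in>UNIV. \<omega> (n + 1))"
  by (simp add: shift_def fun_eq_iff)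

lemma shift_meas: "shift \<in> measurable noiseP noiseP"
  unfolding noiseP_eq shift_eq
  by (intro measurable_restrict measurable_component_singleton) auto

lemma shift_distr: "distr noiseP noiseP shift = noiseP"
proof -
  have "distr (PiM UNIV Mu) (\<Pi>\<^sub>M i\<in>UNIV. Mu (i+1)) (\<lambda>\<omega>. \<lambda>n\<in>UNIV. \<omega> (n + 1)) = (\<Pi>\<^sub>M i\<in>UNIV. Mu (i+1))"
    by (rule distr_PiM_reindex) (auto simp: prob_space_Mu)
  then show ?thesis unfolding noiseP_eq shift_eq by simp
qed

lemma shiftn_meas: "(shift ^^ n) \<in> measurable noiseP noiseP"
  by (induction n) (auto intro: measurable_compose[OF _ shift_meas])

lemma shiftn_distr: "distr noiseP noiseP (shift ^^ n) = noiseP"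
proof (induction n)
  case 0 then show ?case by (simp add: distr_id2)
next
  case (Suc n)
  have "distr noiseP noiseP (shift ^^ Suc n) = distr noiseP noiseP (shift \<circ> (shift ^^ n))" by simp
  also have "\<dots> = distr (distr noiseP noiseP (shift ^^ n)) noiseP shift"
    by (rule distr_distr[symmetric]) (rule shift_meas, rule shiftn_meas)
  also have "\<dots> = noiseP" using Suc shift_distr by simp
  finally show ?case .
qed

lemma shift_inv: "S \<in> sets noiseP \<Longrightarrow> NP.prob ((shift ^^ n) -` S \<inter> space noiseP) = NP.prob S"
proof -
  assume S: "S \<in> sets noiseP"
  have "NP.prob S = measure (distr noiseP noiseP (shift ^^ n)) S" by (simp add: shiftn_distr)
  also have "\<dots> = NP.prob ((shift ^^ n) -` S \<inter> space noiseP)"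
    by (rule measure_distr[OF shiftn_meas S])
  finally show ?thesis by simp
qed

lemma indep_coords: "NP.indep_vars Mu (\<lambda>i q. q i) UNIV"
proof -
  have rv: "\<And>i. (\<lambda>q. q i) \<in> measurable noiseP (Mu i)" unfolding noiseP_eq
    by (rule measurable_component_singleton) auto
  have d: "\<And>i. distr noiseP (Mu i) (\<lambda>q. q i) = Mu i" unfolding noiseP_eq
    by (rule distr_PiM_component) (auto simp: prob_space_Mu)
  have e: "(\<lambda>x. \<lambda>i\<in>UNIV. x i) = (\<lambda>x. x)" by (simp add: fun_eq_iff)
  show ?thesis
    apply (subst NP.indep_vars_iff_distr_eq_PiM)
    apply simp
    apply (rule rv)
    unfolding d e
    by (simp add: noiseP_eq[symmetric] distr_id2)
qed

lemma prob_coord: "S \<in> sets borel \<Longrightarrow> NP.prob ((\<lambda>q. q i) -` S \<inter> space noiseP) = measure lborel (S \<inter> {0..1})"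
proof -
  assume S: "S \<in> sets borel"
  have rv: "(\<lambda>q. q i) \<in> measurable noiseP (Mu i)" unfolding noiseP_eq
    by (rule measurable_component_singleton) auto
  have d: "distr noiseP (Mu i) (\<lambda>q. q i) = Mu i" unfolding noiseP_eq
    by (rule distr_PiM_component) (auto simp: prob_space_Mu)
  have S': "S \<inter> {0..1} \<in> sets (Mu i)" using S by (auto simp: sets_restrict_space)
  have "(\<lambda>q. q i) -` S \<inter> space noiseP = (\<lambda>q. q i) -` (S \<inter> {0..1}) \<inter> space noiseP"
    by (auto simp: space_noiseP)
  also have "NP.prob \<dots> = measure (Mu i) (S \<inter> {0..1})"
    by (metis measure_distr[OF rv S'] d)
  also have "\<dots> = measure lborel (S \<inter> {0..1})"
    by (subst measure_restrict_space) (auto simp: Int_absorb1)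
  finally show ?thesis .
qed

definition Fset :: "real \<Rightarrow> nat \<Rightarrow> nat \<Rightarrow> noise set" where
  "Fset p n m = {q \<in> space noiseP. \<forall>j<m. q (int (n + j)) \<in> {p..<1}}"

lemma coc_restrict: "(\<forall>k<n. int k \<in> I) \<Longrightarrow> bd_cocycle g1 g2 n (restrict q I) x = bd_cocycle g1 g2 n q x"
  by (induction n) (simp_all add: coc_Suc Let_def del: bd_cocycle.simps(2))

lemma Ico_sets: "0 \<le> p \<Longrightarrow> {p..<1::real} \<in> sets (restrict_space lborel {0..1})"
  by (subst sets_restrict_space_iff) auto

lemma Ico_int: "0 \<le> p \<Longrightarrow> p \<le> 1 \<Longrightarrow> measure lborel ({p..<1::real} \<inter> {0..1}) = 1 - p"
proof -
  assume "0 \<le> p" "p \<le> 1"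
  then have "{p..<1::real} \<inter> {0..1} = {p..<1}" by auto
  then show ?thesis using \<open>p \<le> 1\<close> by simp
qed

lemma Fset_sets: "Fset p n m \<in> sets noiseP"
proof -
  have c: "\<And>i. (\<lambda>q. q i) \<in> borel_measurable noiseP" unfolding noiseP_eq by (rule coord_meas) auto
  show ?thesis unfolding Fset_def using c by measurable
qed

lemma prob_Fset: assumes "0 \<le> p" "p \<le> 1" shows "NP.prob (Fset p n m) = (1 - p) ^ m"
proof (cases "m = 0")
  case True
  then show ?thesis by (simp add: Fset_def NP.prob_space)
next
  case False
  let ?J = "{int n..<int n + int m}"
  have "Fset p n m = (\<Inter>i\<in>?J. (\<lambda>q. q i) -` {p..<1} \<inter> space noiseP)"
    using False unfolding Fset_def
    apply auto
    subgoal for q i by (drule spec[of _ "nat (i - int n)"]) auto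
    subgoal for q i by (drule spec[of _ "nat (i - int n)"]) auto
    done
  also have "NP.prob \<dots> = (\<Prod>i\<in>?J. NP.prob ((\<lambda>q. q i) -` {p..<1} \<inter> space noiseP))"
    using False assms by (intro NP.indep_varsD[OF indep_coords]) (auto simp: Ico_sets)
  also have "\<dots> = (\<Prod>i\<in>?J. 1 - p)"
    using assms by (intro prod.cong refl) (simp add: prob_coord Int_absorb2 Ico_int)
  also have "\<dots> = (1 - p) ^ m" by simp
  finally show ?thesis .
qed

lemma indep_phi:
  assumes R: "Measurable.pred (PiM {0..<int n} Mu) (\<lambda>r. R (\<lambda>x. bd_cocycle g1 g2 n r x))"
    and p: "0 \<le> p" "p \<le> 1"
  shows "NP.prob ({q\<in>space noiseP. R (\<lambda>x. bd_cocycle g1 g2 n q x)} \<inter> Fset p n m)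
       = NP.prob {q\<in>space noiseP. R (\<lambda>x. bd_cocycle g1 g2 n q x)} * (1 - p) ^ m"
proof -
  let ?A = "{0..<int n}" and ?B = "{int n..<int n + int m}"
  let ?X = "\<lambda>q. restrict q ?A" and ?Y = "\<lambda>q. restrict q ?B"
  have iv: "NP.indep_var (PiM ?A Mu) ?X (PiM ?B Mu) ?Y"
    using NP.indep_var_restrict[OF indep_coords, of ?A ?B] by auto
  let ?G' = "{r \<in> space (PiM ?A Mu). R (\<lambda>x. bd_cocycle g1 g2 n r x)}"
  let ?F' = "PiE ?B (\<lambda>_. {p..<1})"
  have G': "?G' \<in> sets (PiM ?A Mu)" using predE[OF R] by simp
  have F': "?F' \<in> sets (PiM ?B Mu)"
    using p by (intro sets_PiM_I_finite) (auto simp: sets_restrict_space)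
  have cr: "\<And>q. bd_cocycle g1 g2 n (?X q) = bd_cocycle g1 g2 n q"
    by (rule ext, rule coc_restrict) auto
  have Xsp: "\<And>q. q \<in> space noiseP \<Longrightarrow> ?X q \<in> space (PiM ?A Mu)"
    by (auto simp: space_noiseP space_PiM space_restrict_space)
  have eG: "?X -` ?G' \<inter> space noiseP = {q\<in>space noiseP. R (\<lambda>x. bd_cocycle g1 g2 n q x)}"
    using Xsp by (auto simp: cr)
  have eF: "?Y -` ?F' \<inter> space noiseP = Fset p n m"
    unfolding Fset_def
    apply auto
    subgoal for q j by (drule funcset_mem[of _ _ _ "int n + int j"]) auto
    subgoal for q j by (drule funcset_mem[of _ _ _ "int n + int j"]) auto
    subgoal for q i by (drule spec[of _ "nat (i - int n)"]) auto
    subgoal for q i by (drule spec[of _ "nat (i - int n)"]) auto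
    done
  have "(\<lambda>q. (?X q, ?Y q)) -` (?G' \<times> ?F') \<inter> space noiseP
     = {q\<in>space noiseP. R (\<lambda>x. bd_cocycle g1 g2 n q x)} \<inter> Fset p n m"
    using eG eF by blast
  then show ?thesis using NP.indep_varD[OF iv G' F'] eG eF prob_Fset[OF p] by simp
qed

lemma pdist_notin:
  assumes "finite S" "S \<noteq> {}" "x \<notin> S" shows "pdist x S \<ge> 1"
proof -
  have cl: "closed (real ` S)" using assms by (simp add: finite_imp_closed)
  obtain a where a: "a \<in> real ` S" "infdist (real x) (real ` S) = dist (real x) a"
    using infdist_attains_inf[OF cl] assms by auto
  then obtain b where b: "b \<in> S" "a = real b" by auto
  with assms have "b \<noteq> x" by auto
  then have "dist (real x) (real b) \<ge> 1" by (simp add: dist_real_def)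
  then show ?thesis using a b by (simp add: pdist_def)
qed

lemma pdist_in: "x \<in> S \<Longrightarrow> pdist x S = 0"
  by (simp add: pdist_def)

lemma hdist_gt:
  assumes "finite S" "S \<noteq> {}"
  shows "hdist S B > e \<longleftrightarrow> (\<exists>x\<in>S. pdist x B > e)"
proof -
  have "hdist S B = Max ((\<lambda>x. pdist x B) ` S)" using assms
    by (simp add: hdist_def cSup_eq_Max)
  then show ?thesis using assms by (simp add: Max_gr_iff)
qed

lemma hdist_gt_img:
  assumes "finite B" "B \<noteq> {}"
  shows "hdist (f ` B) C > e \<longleftrightarrow> (\<exists>x\<in>B. pdist (f x) C > e)"
  using assms by (subst hdist_gt) auto

locale WA =
  fixes g1 g2 :: real and A :: "noise \<Rightarrow> nat set"
  assumes g1: "g1 > 0" and g2: "g2 > 0" and wa: "weak_attractor g1 g2 A"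
begin

abbreviation "phi n q x \<equiv> bd_cocycle g1 g2 n q x"

lemma pd_meas: "(\<lambda>q. pdist x (A q)) \<in> borel_measurable noiseP"
  using wa by (simp add: weak_attractor_def)
lemma finA: "q \<in> space noiseP \<Longrightarrow> A q \<noteq> {} \<and> finite (A q)"
  using wa by (simp add: weak_attractor_def)
lemma invA: "AE q in noiseP. \<forall>n. phi n q ` A q = A ((shift ^^ n) q)"
  using wa by (simp add: weak_attractor_def)
lemma convA: "finite B \<Longrightarrow> e > 0 \<Longrightarrow> (\<lambda>n. emeasure noiseP {q \<in> space noiseP.
              hdist (phi n q ` B) (A ((shift ^^ n) q)) > e}) \<longlonglongrightarrow> 0"
  using wa by (simp add: weak_attractor_def)

lemma mem_pred[measurable]: "Measurable.pred noiseP (\<lambda>q. x \<in> A q)"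
proof -
  have "{q \<in> space noiseP. x \<in> A q} = {q \<in> space noiseP. pdist x (A q) < 1/2}"
    using finA pdist_notin pdist_in by fastforce
  also have "\<dots> \<in> sets noiseP" using pd_meas by measurable
  finally show ?thesis unfolding pred_def .
qed

lemma mem_pred_sh[measurable]: "Measurable.pred noiseP (\<lambda>q. x \<in> A ((shift ^^ n) q))"
  by (rule measurable_compose[OF shiftn_meas mem_pred])

lemma phi_meas[measurable]: "(\<lambda>q. phi n q x) \<in> measurable noiseP (count_space UNIV)"
  unfolding noiseP_eq by (rule coc_meas) auto

lemma pd_meas_sh: "(\<lambda>q. pdist x (A ((shift ^^ n) q))) \<in> borel_measurable noiseP"
  by (rule measurable_compose[OF shiftn_meas pd_meas])

lemma tight: "(\<lambda>K. NP.prob {q\<in>space noiseP. \<exists>x. K < x \<and> x \<in> A q}) \<longlonglongrightarrow> 0"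
proof -
  let ?S = "\<lambda>K. {q\<in>space noiseP. \<exists>x. K < x \<and> x \<in> A q}"
  have "(\<lambda>K. NP.prob (?S K)) \<longlonglongrightarrow> NP.prob (\<Inter>K. ?S K)"
  proof (rule NP.finite_Lim_measure_decseq)
    show "range ?S \<subseteq> NP.events" by auto
    show "decseq ?S" unfolding decseq_def by (intro allI impI subsetI) (use le_less_trans in blast)
  qed
  moreover have "(\<Inter>K. ?S K) = {}"
  proof safe
    fix q assume "q \<in> (\<Inter>K. ?S K)"
    then have q: "q \<in> space noiseP" and h: "\<And>K. \<exists>x. K < x \<and> x \<in> A q" by auto
    from finA[OF q] obtain K where "\<forall>x\<in>A q. x \<le> K"
      using finite_nat_set_iff_bounded_le by blast
    with h[of K] show "q \<in> {}" by auto
  qed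
  ultimately show ?thesis by simp
qed

lemma attr:
  assumes B: "finite B" "B \<noteq> {}"
  shows "(\<lambda>n. NP.prob {q\<in>space noiseP. \<exists>x\<in>B. phi n q x \<notin> A ((shift ^^ n) q)}) \<longlonglongrightarrow> 0"
proof -
  let ?H = "\<lambda>n. {q \<in> space noiseP. hdist (phi n q ` B) (A ((shift ^^ n) q)) > 1/2}"
  let ?S = "\<lambda>n. {q\<in>space noiseP. \<exists>x\<in>B. phi n q x \<notin> A ((shift ^^ n) q)}"
  have Heq: "?H n = {q \<in> space noiseP. \<exists>x\<in>B. \<exists>y. phi n q x = y \<and> pdist y (A ((shift ^^ n) q)) > 1/2}" for n
    by (rule Collect_cong) (use hdist_gt_img[OF B] in blast)
  have Hs: "?H n \<in> sets noiseP" for n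
    unfolding Heq using B pd_meas_sh by measurable
  have "(\<lambda>n. ennreal (NP.prob (?H n))) \<longlonglongrightarrow> ennreal 0"
    using convA[OF B(1), of "1/2"] by (simp add: NP.emeasure_eq_measure)
  then have H0: "(\<lambda>n. NP.prob (?H n)) \<longlonglongrightarrow> 0"
    by (subst (asm) tendsto_ennreal_iff) auto
  have sub: "?S n \<subseteq> ?H n" for n
  proof
    fix q assume "q \<in> ?S n"
    then obtain x where q: "q \<in> space noiseP" and x: "x \<in> B" "phi n q x \<notin> A ((shift ^^ n) q)" by auto
    have sp: "(shift ^^ n) q \<in> space noiseP" using q measurable_space[OF shiftn_meas] by blast
    have "pdist (phi n q x) (A ((shift ^^ n) q)) \<ge> 1"
      using finA[OF sp] x by (intro pdist_notin) auto
    then show "q \<in> ?H n" using q x hdist_gt_img[OF B] by fastforce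
  qed
  show ?thesis
  proof (rule tendsto_sandwich[OF _ _ tendsto_const H0])
    show "\<forall>\<^sub>F n in sequentially. 0 \<le> NP.prob (?S n)" by simp
    show "\<forall>\<^sub>F n in sequentially. NP.prob (?S n) \<le> NP.prob (?H n)"
      using sub Hs by (intro always_eventually allI NP.finite_measure_mono)
  qed
qed

end

lemma par_a: "((v::nat) + 1) mod 2 \<noteq> v mod 2" by (simp add: mod_Suc)
lemma par_b: "(v::nat) \<noteq> 0 \<Longrightarrow> (v - 1) mod 2 \<noteq> v mod 2" by (cases v) (simp_all add: mod_Suc)

lemma step_par:
  assumes "g1 > 0" "g2 > 0" "q (int n) < 1"
  shows "bd_cocycle g1 g2 (Suc n) q x mod 2 \<noteq> bd_cocycle g1 g2 n q x mod 2"
proof -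
  define v where "v = bd_cocycle g1 g2 n q x"
  have e: "bd_cocycle g1 g2 (Suc n) q x = (if q (int n) < g1 / (g1 + g2 * real v) then v + 1 else v - 1)"
    unfolding v_def by (simp only: coc_Suc Let_def)
  have a: "(v + 1) mod 2 \<noteq> v mod 2" by (rule par_a)
  show ?thesis
  proof (cases "v = 0")
    case True
    then show ?thesis using assms unfolding e v_def[symmetric] by simp
  next
    case False
    then have "(v - 1) mod 2 \<noteq> v mod 2" by (rule par_b)
    then show ?thesis using a unfolding e v_def[symmetric] by simp
  qed
qed

lemma pred_eq_count[measurable (raw)]:
  assumes "f \<in> measurable M (count_space (UNIV::nat set))" "g \<in> measurable M (count_space UNIV)"
  shows "Measurable.pred M (\<lambda>x. f x = g x)"
proof -
  have h: "Measurable.pred M (\<lambda>x. \<exists>a::nat. f x = a \<and> g x = a)" using assms by measurable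
  have e: "(\<lambda>x. \<exists>a::nat. f x = a \<and> g x = a) = (\<lambda>x. f x = g x)" by auto
  show ?thesis using h unfolding e .
qed

lemma pred_le_count[measurable (raw)]:
  assumes "f \<in> measurable M (count_space (UNIV::nat set))"
  shows "Measurable.pred M (\<lambda>x. f x \<le> K)"
proof -
  have "Measurable.pred M (\<lambda>x. \<exists>a::nat. f x = a \<and> a \<le> K)" using assms by measurable
  then show ?thesis by simp
qed

lemma pred_gt_count[measurable (raw)]:
  assumes "f \<in> measurable M (count_space (UNIV::nat set))"
  shows "Measurable.pred M (\<lambda>x. K < f x)"
proof -
  have "Measurable.pred M (\<lambda>x. \<exists>a::nat. f x = a \<and> K < a)" using assms by measurable
  then show ?thesis by simp
qed

lemma max_aux: "(v::nat) \<le> max (a - m) 1 \<Longrightarrow> max (v - 1) 1 \<le> max (a - Suc m) 1"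
  by arith

lemma mod2_aux: "(b::nat) mod 2 \<noteq> a mod 2 \<Longrightarrow> a mod 2 = c mod 2 \<Longrightarrow> b mod 2 = Suc c mod 2"
  by (simp add: mod_Suc) linarith

lemma par:
  assumes "g1 > 0" "g2 > 0" "\<forall>k<n. q (int k) < 1"
  shows "bd_cocycle g1 g2 n q x mod 2 = (x + n) mod 2"
  using assms(3)
proof (induction n)
  case 0 then show ?case by simp
next
  case (Suc n)
  then have "bd_cocycle g1 g2 n q x mod 2 = (x + n) mod 2" by auto
  moreover have "bd_cocycle g1 g2 (Suc n) q x mod 2 \<noteq> bd_cocycle g1 g2 n q x mod 2"
    using Suc.prems assms by (intro step_par) auto
  ultimately show ?case using mod2_aux by simp
qed

lemma descent:
  assumes g: "g1 > 0" "g2 > 0" and F: "\<forall>j<m. q (int (n + j)) \<in> {g1/(g1+g2)..<1}"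
  shows "bd_cocycle g1 g2 (n + m) q x \<le> max (bd_cocycle g1 g2 n q x - m) 1"
  using F
proof (induction m)
  case 0 then show ?case by simp
next
  case (Suc m)
  let ?v = "bd_cocycle g1 g2 (n + m) q x"
  have IH: "?v \<le> max (bd_cocycle g1 g2 n q x - m) 1" using Suc by auto
  have qm: "g1/(g1+g2) \<le> q (int (n+m))" "q (int (n+m)) < 1" using Suc.prems by auto
  have "bd_cocycle g1 g2 (n + Suc m) q x = (if q (int (n+m)) < g1 / (g1 + g2 * real ?v) then ?v + 1 else ?v - 1)"
    by (simp add: coc_Suc Let_def del: bd_cocycle.simps)
  also have "\<dots> \<le> max (?v - 1) 1"
  proof (cases "?v = 0")
    case True then show ?thesis by simp
  next
    case False
    then have "real ?v \<ge> 1" by simp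
    then have "g2 * real ?v \<ge> g2" using g by simp
    then have "g1 / (g1 + g2 * real ?v) \<le> g1/(g1+g2)" using g
      by (intro divide_left_mono) (auto intro!: mult_pos_pos add_pos_nonneg)
    then show ?thesis using qm by auto
  qed
  also have "\<dots> \<le> max (bd_cocycle g1 g2 n q x - Suc m) 1" using IH by (rule max_aux)
  finally show ?case .
qed

lemma step_fun: "\<exists>h. \<forall>x. bd_cocycle g1 g2 (Suc n) q x = h (bd_cocycle g1 g2 n q x)"
  by (rule exI[of _ "bd_step g1 g2 ((shift ^^ n) q)"]) simp

lemma iter_fun: "\<exists>h. \<forall>x. bd_cocycle g1 g2 (n + m) q x = h (bd_cocycle g1 g2 n q x)"
proof (induction m)
  case 0 then show ?case by (intro exI[of _ id]) simp
next
  case (Suc m)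
  then obtain h where h: "\<forall>x. bd_cocycle g1 g2 (n + m) q x = h (bd_cocycle g1 g2 n q x)" by blast
  obtain h' where h': "\<forall>x. bd_cocycle g1 g2 (Suc (n + m)) q x = h' (bd_cocycle g1 g2 (n+m) q x)"
    using step_fun by blast
  show ?case using h h' by (intro exI[of _ "h' \<circ> h"]) simp
qed

context WA begin

definition Bad :: "nat \<Rightarrow> nat \<Rightarrow> noise set" where
  "Bad L n = {q\<in>space noiseP. \<exists>x y z. x \<le> L \<and> y \<le> L \<and> z \<le> L \<and>
      phi n q x \<noteq> phi n q y \<and> phi n q x \<noteq> phi n q z \<and> phi n q y \<noteq> phi n q z}"

lemma Bad_sets: "Bad L n \<in> sets noiseP"
  unfolding Bad_def by measurable

lemma Bad_mono: "Bad L (n + m) \<subseteq> Bad L n"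
proof
  fix q assume "q \<in> Bad L (n + m)"
  then obtain x y z where q: "q \<in> space noiseP" "x \<le> L" "y \<le> L" "z \<le> L" and
    d: "phi (n+m) q x \<noteq> phi (n+m) q y" "phi (n+m) q x \<noteq> phi (n+m) q z" "phi (n+m) q y \<noteq> phi (n+m) q z"
    unfolding Bad_def by blast
  obtain h where h: "\<forall>x. phi (n + m) q x = h (phi n q x)" using iter_fun by blast
  have "phi n q x \<noteq> phi n q y" "phi n q x \<noteq> phi n q z" "phi n q y \<noteq> phi n q z"
    using d by (auto simp: h)
  then show "q \<in> Bad L n" using q unfolding Bad_def by blast
qed

lemma R_meas: "Measurable.pred (PiM {0..<int n} Mu) (\<lambda>r.
   (\<exists>x y z. x \<le> L \<and> y \<le> L \<and> z \<le> L \<and>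
      bd_cocycle g1 g2 n r x \<noteq> bd_cocycle g1 g2 n r y \<and> bd_cocycle g1 g2 n r x \<noteq> bd_cocycle g1 g2 n r z
     \<and> bd_cocycle g1 g2 n r y \<noteq> bd_cocycle g1 g2 n r z) \<and> (\<forall>x\<le>L. bd_cocycle g1 g2 n r x \<le> K))"
proof -
  have [measurable]: "\<And>x. (\<lambda>r. bd_cocycle g1 g2 n r x) \<in> measurable (PiM {0..<int n} Mu) (count_space UNIV)"
    by (rule coc_meas) auto
  show ?thesis by measurable
qed

end

context WA begin

definition p1 :: real where "p1 = g1 / (g1 + g2)"

lemma p1_bounds: "0 < p1" "p1 < 1"
  using g1 g2 by (auto simp: p1_def divide_less_eq)

definition tau :: "nat \<Rightarrow> real" where
  "tau K = NP.prob {q\<in>space noiseP. \<exists>x. K < x \<and> x \<in> A q}"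

definition Tset :: "nat \<Rightarrow> nat \<Rightarrow> nat \<Rightarrow> noise set" where
  "Tset L K n = {q\<in>space noiseP. \<forall>x\<le>L. phi n q x \<le> K}"

definition Sset :: "nat set \<Rightarrow> nat \<Rightarrow> noise set" where
  "Sset B n = {q\<in>space noiseP. \<exists>x\<in>B. phi n q x \<notin> A ((shift ^^ n) q)}"

lemma Tset_sets: "Tset L K n \<in> sets noiseP" unfolding Tset_def by measurable

lemma Sset_sets: "finite B \<Longrightarrow> Sset B n \<in> sets noiseP"
proof -
  assume B: "finite B"
  have e: "Sset B n = {q\<in>space noiseP. \<exists>x\<in>B. \<exists>y. phi n q x = y \<and> y \<notin> A ((shift ^^ n) q)}"
    unfolding Sset_def by auto
  show ?thesis unfolding e using B by measurable
qed

lemma shiftn_space: "q \<in> space noiseP \<Longrightarrow> (shift ^^ n) q \<in> space noiseP"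
  using measurable_space[OF shiftn_meas] by blast

lemma tau_shift: "NP.prob {q\<in>space noiseP. \<exists>x. K < x \<and> x \<in> A ((shift ^^ n) q)} = tau K"
proof -
  have E: "{q\<in>space noiseP. \<exists>x. K < x \<and> x \<in> A ((shift ^^ n) q)}
     = (shift ^^ n) -` {q\<in>space noiseP. \<exists>x. K < x \<and> x \<in> A q} \<inter> space noiseP"
    using shiftn_space by auto
  have S: "{q\<in>space noiseP. \<exists>x. K < x \<and> x \<in> A q} \<in> sets noiseP" by measurable
  show ?thesis unfolding tau_def E by (rule shift_inv[OF S])
qed

lemma notT_bound: "NP.prob (space noiseP - Tset L K n) \<le> NP.prob (Sset {..L} n) + tau K"
proof -
  let ?U = "{q\<in>space noiseP. \<exists>x. K < x \<and> x \<in> A ((shift ^^ n) q)}"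
  have U: "?U \<in> sets noiseP" by measurable
  have "space noiseP - Tset L K n \<subseteq> Sset {..L} n \<union> ?U"
    unfolding Tset_def Sset_def by (auto simp: not_le)
  then have "NP.prob (space noiseP - Tset L K n) \<le> NP.prob (Sset {..L} n \<union> ?U)"
    using U Sset_sets[of "{..L}"] by (intro NP.finite_measure_mono) auto
  also have "\<dots> \<le> NP.prob (Sset {..L} n) + NP.prob ?U"
    using U Sset_sets[of "{..L}"] by (intro measure_Un_le) auto
  finally show ?thesis by (simp add: tau_shift)
qed

lemma tau_small: "\<epsilon> > 0 \<Longrightarrow> \<exists>K. tau K < \<epsilon>"
  using order_tendstoD(2)[OF tight] unfolding tau_def
  by (metis (no_types, lifting) eventually_sequentially order_refl)

lemma Sset_small: "finite B \<Longrightarrow> B \<noteq> {} \<Longrightarrow> \<epsilon> > 0 \<Longrightarrow> \<exists>N. \<forall>n\<ge>N. NP.prob (Sset B n) < \<epsilon>"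
  using order_tendstoD(2)[OF attr] unfolding Sset_def eventually_sequentially by blast

end

lemma no3: "(a::nat) \<le> 1 \<Longrightarrow> b \<le> 1 \<Longrightarrow> c \<le> 1 \<Longrightarrow> a \<noteq> b \<Longrightarrow> a \<noteq> c \<Longrightarrow> b \<noteq> c \<Longrightarrow> False"
  by arith

context WA begin

lemma coalesce: "Tset L K n \<inter> Fset p1 n K \<inter> Bad L (n+K) = {}"
proof -
  { fix q assume q: "q \<in> Tset L K n" "q \<in> Fset p1 n K"
    have le1: "\<forall>x\<le>L. phi (n+K) q x \<le> 1"
    proof (intro allI impI)
      fix x assume "x \<le> L"
      then have "phi n q x \<le> K" using q by (auto simp: Tset_def)
      moreover have "phi (n+K) q x \<le> max (phi n q x - K) 1"
        using q(2) g1 g2 by (intro descent) (auto simp: Fset_def p1_def)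
      ultimately show "phi (n+K) q x \<le> 1" by simp
    qed
    have "q \<notin> Bad L (n+K)"
    proof
      assume "q \<in> Bad L (n+K)"
      then obtain x y z where "x \<le> L" "y \<le> L" "z \<le> L" and
        d: "phi (n+K) q x \<noteq> phi (n+K) q y" "phi (n+K) q x \<noteq> phi (n+K) q z" "phi (n+K) q y \<noteq> phi (n+K) q z"
        unfolding Bad_def by blast
      then show False using le1 no3[OF _ _ _ d] by blast
    qed
  }
  then show ?thesis by blast
qed

lemma Bad_small:
  assumes eps: "\<epsilon> > 0" shows "\<exists>n. NP.prob (Bad L n) < \<epsilon>"
proof (rule ccontr)
  assume "\<not> ?thesis"
  then have ge: "\<And>n. NP.prob (Bad L n) \<ge> \<epsilon>" by (simp add: not_less)
  obtain K where K: "tau K < \<epsilon>/4" using tau_small[of "\<epsilon>/4"] eps by auto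
  obtain N where N: "\<And>n. n \<ge> N \<Longrightarrow> NP.prob (Sset {..L} n) < \<epsilon>/4"
    using Sset_small[of "{..L}" "\<epsilon>/4"] eps by auto
  define c where "c = (1 - p1) ^ K"
  have c: "0 < c" "c \<le> 1" using p1_bounds by (auto simp: c_def power_le_one)
  have step: "NP.prob (Bad L (n+K)) \<le> NP.prob (Bad L n) - c * \<epsilon> / 2" if n: "n \<ge> N" for n
  proof -
    let ?T = "Tset L K n"
    let ?G = "Bad L n \<inter> ?T"
    let ?F = "Fset p1 n K"
    have sT: "?T \<in> sets noiseP" by (rule Tset_sets)
    have sB: "Bad L n \<in> sets noiseP" by (rule Bad_sets)
    have sF: "?F \<in> sets noiseP" by (rule Fset_sets)
    have nT: "NP.prob (space noiseP - ?T) < \<epsilon>/2"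
      using notT_bound[of L K n] N[OF n] K by linarith
    have "Bad L n \<subseteq> ?G \<union> (space noiseP - ?T)" unfolding Bad_def by auto
    then have "NP.prob (Bad L n) \<le> NP.prob (?G \<union> (space noiseP - ?T))"
      using sT sB by (intro NP.finite_measure_mono) auto
    also have "\<dots> \<le> NP.prob ?G + NP.prob (space noiseP - ?T)"
      using sT sB by (intro measure_Un_le) auto
    finally have G: "NP.prob ?G \<ge> \<epsilon> / 2" using nT ge[of n] by linarith
    have Geq: "{q\<in>space noiseP. (\<exists>x y z. x \<le> L \<and> y \<le> L \<and> z \<le> L \<and>
      phi n q x \<noteq> phi n q y \<and> phi n q x \<noteq> phi n q z \<and> phi n q y \<noteq> phi n q z) \<and> (\<forall>x\<le>L. phi n q x \<le> K)}
      = ?G" unfolding Bad_def Tset_def by auto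
    have I: "NP.prob (?G \<inter> ?F) = NP.prob ?G * c"
      using indep_phi[where R = "\<lambda>f. (\<exists>x y z. x \<le> L \<and> y \<le> L \<and> z \<le> L \<and>
      f x \<noteq> f y \<and> f x \<noteq> f z \<and> f y \<noteq> f z) \<and> (\<forall>x\<le>L. f x \<le> K)" and n = n
        and p = p1 and m = K, OF R_meas[where n=n and L=L and K=K]] p1_bounds
      unfolding Geq c_def by simp
    have D: "Bad L (n+K) \<subseteq> Bad L n - (?G \<inter> ?F)" using Bad_mono coalesce by blast
    then have "NP.prob (Bad L (n+K)) \<le> NP.prob (Bad L n - (?G \<inter> ?F))"
      using sT sB sF by (intro NP.finite_measure_mono) auto
    also have "\<dots> = NP.prob (Bad L n) - NP.prob (?G \<inter> ?F)"
      using sT sB sF by (intro NP.finite_measure_Diff) auto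
    also have "\<dots> = NP.prob (Bad L n) - NP.prob ?G * c" using I by simp
    also have "\<dots> \<le> NP.prob (Bad L n) - \<epsilon> / 2 * c"
      using G c by (simp add: mult_right_mono)
    finally show ?thesis by (simp add: mult.commute)
  qed
  have iter: "NP.prob (Bad L (N + j * K)) \<le> NP.prob (Bad L N) - real j * (c * \<epsilon> / 2)" for j
  proof (induction j)
    case 0 then show ?case by simp
  next
    case (Suc j)
    have e: "N + Suc j * K = (N + j * K) + K" by simp
    have "NP.prob (Bad L (N + Suc j * K)) \<le> NP.prob (Bad L (N + j * K)) - c * \<epsilon> / 2"
      unfolding e by (rule step) simp
    moreover have "real (Suc j) * (c * \<epsilon> / 2) = real j * (c * \<epsilon> / 2) + c * \<epsilon> / 2"
      by (simp add: algebra_simps)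
    ultimately show ?case using Suc.IH by linarith
  qed
  obtain j :: nat where j: "2 / (c * \<epsilon>) < real j" using reals_Archimedean2 by blast
  have ce: "c * \<epsilon> > 0" using c eps by simp
  then have "1 < real j * (c * \<epsilon> / 2)" using j by (simp add: field_simps)
  moreover have "NP.prob (Bad L N) \<le> 1" by simp
  moreover have "NP.prob (Bad L (N + j * K)) \<ge> \<epsilon>" by (rule ge)
  ultimately show False using iter[of j] eps by linarith
qed

lemma Bad_eventually:
  assumes "\<epsilon> > 0" shows "\<exists>N. \<forall>n\<ge>N. NP.prob (Bad L n) < \<epsilon>"
proof -
  obtain n0 where n0: "NP.prob (Bad L n0) < \<epsilon>" using Bad_small[OF assms] by blast
  { fix n assume "n \<ge> n0"
    then have "Bad L n \<subseteq> Bad L n0" using Bad_mono[of L n0 "n - n0"] by simp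
    then have "NP.prob (Bad L n) \<le> NP.prob (Bad L n0)"
      by (intro NP.finite_measure_mono Bad_sets)
    with n0 have "NP.prob (Bad L n) < \<epsilon>" by simp }
  then show ?thesis by blast
qed

end

lemma AE_Mu_lt1: "AE x in restrict_space lborel {0..1::real}. x < 1"
proof (rule AE_I')
  show "{1::real} \<in> null_sets (restrict_space lborel {0..1})"
    by (subst null_sets_restrict_space) (auto intro: countable_imp_null_set_lborel)
  show "{x \<in> space (restrict_space lborel {0..1::real}). \<not> x < 1} \<subseteq> {1}"
    by (auto simp: space_restrict_space)
qed

lemma AE_lt1: "AE q in noiseP. \<forall>k::nat. q (int k) < 1"
proof (subst AE_all_countable, intro allI)
  fix k :: nat
  show "AE q in noiseP. q (int k) < 1"
    unfolding noiseP_eq using AE_Mu_lt1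
    by (intro AE_PiM_component[where M = Mu]) (auto simp: prob_space_Mu)
qed

context WA begin

definition C3 :: "noise set" where
  "C3 = {q\<in>space noiseP. \<exists>x y z. x \<in> A q \<and> y \<in> A q \<and> z \<in> A q \<and> x \<noteq> y \<and> x \<noteq> z \<and> y \<noteq> z}"

definition Dp :: "noise set" where
  "Dp = {q\<in>space noiseP. \<not> ((\<exists>x. even x \<and> x \<in> A q) \<and> (\<exists>x. odd x \<and> x \<in> A q))}"

lemma C3_sets: "C3 \<in> sets noiseP" unfolding C3_def by measurable
lemma Dp_sets: "Dp \<in> sets noiseP" unfolding Dp_def by measurable

lemma C3_shift: "NP.prob C3 = NP.prob {q\<in>space noiseP. \<exists>x y z. x \<in> A ((shift ^^ n) q) \<and> y \<in> A ((shift ^^ n) q)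
   \<and> z \<in> A ((shift ^^ n) q) \<and> x \<noteq> y \<and> x \<noteq> z \<and> y \<noteq> z}"
proof -
  have E: "{q\<in>space noiseP. \<exists>x y z. x \<in> A ((shift ^^ n) q) \<and> y \<in> A ((shift ^^ n) q)
   \<and> z \<in> A ((shift ^^ n) q) \<and> x \<noteq> y \<and> x \<noteq> z \<and> y \<noteq> z} = (shift ^^ n) -` C3 \<inter> space noiseP"
    unfolding C3_def using shiftn_space by auto
  show ?thesis unfolding E by (rule shift_inv[OF C3_sets, symmetric])
qed

lemma Dp_shift: "NP.prob Dp = NP.prob {q\<in>space noiseP. \<not> ((\<exists>x. even x \<and> x \<in> A ((shift ^^ n) q))
   \<and> (\<exists>x. odd x \<and> x \<in> A ((shift ^^ n) q)))}"
proof -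
  have E: "{q\<in>space noiseP. \<not> ((\<exists>x. even x \<and> x \<in> A ((shift ^^ n) q))
   \<and> (\<exists>x. odd x \<and> x \<in> A ((shift ^^ n) q)))} = (shift ^^ n) -` Dp \<inter> space noiseP"
    unfolding Dp_def using shiftn_space by auto
  show ?thesis unfolding E by (rule shift_inv[OF Dp_sets, symmetric])
qed

lemma C3_bound: "NP.prob C3 \<le> tau L + NP.prob (Bad L n)"
proof -
  let ?U = "{q\<in>space noiseP. \<exists>x. L < x \<and> x \<in> A q}"
  let ?X = "{q\<in>space noiseP. \<exists>x y z. x \<in> A ((shift ^^ n) q) \<and> y \<in> A ((shift ^^ n) q)
   \<and> z \<in> A ((shift ^^ n) q) \<and> x \<noteq> y \<and> x \<noteq> z \<and> y \<noteq> z}"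
  have sU: "?U \<in> sets noiseP" by measurable
  have "AE q in noiseP. q \<in> ?X \<longrightarrow> q \<in> ?U \<union> Bad L n"
    using invA
  proof (rule eventually_mono)
    fix q assume inv: "\<forall>n. phi n q ` A q = A ((shift ^^ n) q)"
    show "q \<in> ?X \<longrightarrow> q \<in> ?U \<union> Bad L n"
    proof
      assume "q \<in> ?X"
      then obtain x y z where q: "q \<in> space noiseP" and
        xyz: "x \<in> A ((shift ^^ n) q)" "y \<in> A ((shift ^^ n) q)" "z \<in> A ((shift ^^ n) q)"
        and d: "x \<noteq> y" "x \<noteq> z" "y \<noteq> z" by blast
      show "q \<in> ?U \<union> Bad L n"
      proof (cases "\<forall>a\<in>A q. a \<le> L")
        case False
        then show ?thesis using q by (auto simp: not_le)
      next
        case True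
        obtain a where a: "a \<in> A q" "x = phi n q a" using xyz(1) inv[rule_format, of n] by (metis imageE)
        obtain b where b: "b \<in> A q" "y = phi n q b" using xyz(2) inv[rule_format, of n] by (metis imageE)
        obtain c where c: "c \<in> A q" "z = phi n q c" using xyz(3) inv[rule_format, of n] by (metis imageE)
        have "q \<in> Bad L n" unfolding Bad_def using q a b c d True by blast
        then show ?thesis by blast
      qed
    qed
  qed
  then have "NP.prob ?X \<le> NP.prob (?U \<union> Bad L n)"
    using sU Bad_sets by (intro NP.finite_measure_mono_AE) auto
  also have "\<dots> \<le> NP.prob ?U + NP.prob (Bad L n)"
    using sU Bad_sets by (intro measure_Un_le) auto
  finally show ?thesis using C3_shift[of n] unfolding tau_def by simp
qed

lemma C3_zero: "NP.prob C3 = 0"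
proof (rule ccontr)
  assume "NP.prob C3 \<noteq> 0"
  then have pos: "NP.prob C3 > 0" using measure_nonneg[of noiseP C3] by linarith
  obtain L where L: "tau L < NP.prob C3 / 2" using tau_small[of "NP.prob C3 / 2"] pos by auto
  obtain n where n: "NP.prob (Bad L n) < NP.prob C3 / 2" using Bad_small[of "NP.prob C3 / 2" L] pos by auto
  show False using C3_bound[of L n] L n by linarith
qed

lemma Dp_bound: "NP.prob Dp \<le> NP.prob (Sset {0,1} n)"
proof -
  let ?X = "{q\<in>space noiseP. \<not> ((\<exists>x. even x \<and> x \<in> A ((shift ^^ n) q))
   \<and> (\<exists>x. odd x \<and> x \<in> A ((shift ^^ n) q)))}"
  have "AE q in noiseP. q \<in> ?X \<longrightarrow> q \<in> Sset {0,1} n"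
    using AE_lt1
  proof (rule eventually_mono)
    fix q :: noise assume lt: "\<forall>k::nat. q (int k) < 1"
    show "q \<in> ?X \<longrightarrow> q \<in> Sset {0,1} n"
    proof
      assume X: "q \<in> ?X"
      have p0: "phi n q 0 mod 2 = n mod 2" using par[OF g1 g2, of n q 0] lt by simp
      have p1': "phi n q 1 mod 2 = (1 + n) mod 2" using par[OF g1 g2, of n q 1] lt by simp
      have "phi n q 0 \<notin> A ((shift ^^ n) q) \<or> phi n q 1 \<notin> A ((shift ^^ n) q)"
      proof (rule ccontr)
        assume "\<not> ?thesis"
        then have i: "phi n q 0 \<in> A ((shift ^^ n) q)" "phi n q 1 \<in> A ((shift ^^ n) q)" by auto
        show False
        proof (cases "even n")
          case True
          then have "even (phi n q 0)" "odd (phi n q 1)" using p0 p1'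
            by (simp_all add: even_iff_mod_2_eq_zero odd_iff_mod_2_eq_one mod_Suc)
          then show False using X i by blast
        next
          case False
          then have "odd (phi n q 0)" "even (phi n q 1)" using p0 p1'
            by (simp_all add: even_iff_mod_2_eq_zero odd_iff_mod_2_eq_one mod_Suc)
          then show False using X i by blast
        qed
      qed
      then show "q \<in> Sset {0,1} n" using X unfolding Sset_def by auto
    qed
  qed
  then have "NP.prob ?X \<le> NP.prob (Sset {0,1} n)"
    using Sset_sets[of "{0,1}"] by (intro NP.finite_measure_mono_AE) auto
  then show ?thesis using Dp_shift[of n] by simp
qed

lemma Dp_zero: "NP.prob Dp = 0"
proof (rule ccontr)
  assume "NP.prob Dp \<noteq> 0"
  then have pos: "NP.prob Dp > 0" using measure_nonneg[of noiseP Dp] by linarith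
  obtain N where "\<forall>n\<ge>N. NP.prob (Sset {0,1} n) < NP.prob Dp"
    using Sset_small[of "{0,1}" "NP.prob Dp"] pos by auto
  then show False using Dp_bound[of N] by auto
qed

lemma main: "AE q in noiseP. card (A q) = 2
           \<and> A q \<inter> {n. even n} \<noteq> {} \<and> A q \<inter> {n. odd n} \<noteq> {}"
proof -
  have "C3 \<in> null_sets noiseP" using C3_sets C3_zero by (simp add: null_sets_def NP.emeasure_eq_measure)
  then have a1: "AE q in noiseP. q \<notin> C3" by (rule AE_not_in)
  have "Dp \<in> null_sets noiseP" using Dp_sets Dp_zero by (simp add: null_sets_def NP.emeasure_eq_measure)
  then have a2: "AE q in noiseP. q \<notin> Dp" by (rule AE_not_in)
  show ?thesis
    using a1 a2 AE_space
  proof eventually_elim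
    case (elim q)
    then have q: "q \<in> space noiseP" and nc: "q \<notin> C3" and nd: "q \<notin> Dp" by auto
    from nd q obtain a b where a: "even a" "a \<in> A q" and b: "odd b" "b \<in> A q" unfolding Dp_def by auto
    have fin: "finite (A q)" using finA[OF q] by auto
    have ab: "a \<noteq> b" using a b by auto
    have sub: "A q \<subseteq> {a, b}"
    proof
      fix z assume z: "z \<in> A q"
      show "z \<in> {a, b}"
      proof (rule ccontr)
        assume "z \<notin> {a, b}"
        then have "q \<in> C3" unfolding C3_def using q a b z ab by blast
        with nc show False by simp
      qed
    qed
    have "{a, b} \<subseteq> A q" using a b by auto
    then have "A q = {a, b}" using sub by auto
    then have "card (A q) = 2" using ab by simp
    then show ?case using a b by auto
  qed
qed

end

theorem proposition4p8:
  fixes g1 g2 :: real and A :: "noise \<Rightarrow> nat set"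
  assumes "g1 > 0" and "g2 > 0"
    and "weak_attractor g1 g2 A"
  shows "AE q in noiseP. card (A q) = 2
           \<and> A q \<inter> {n. even n} \<noteq> {} \<and> A q \<inter> {n. odd n} \<noteq> {}"
proof -
  interpret WA g1 g2 A using assms by unfold_locales
  show ?thesis by (rule main)
qed

end
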